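(* Let $\mu,\nu\in\mathcal{M}(\mathbb{R}^{d})$ and $r\in\mathbb{R}_{>0}^{d}$. Then for each integer $k\ge1$, \[ H(\mu*\nu^{*k};r)-H(\mu;r)\le k\big(H(\mu*\nu;r)-H(\mu;r)\big). \]
   Context: $\mathcal{M}(\mathbb{R}^d)$ is the set of compactly supported Borel probability measures on $\mathbb{R}^d$; $\nu^{*k}$ is the $k$-fold convolution of $\nu$ with itself. For $\mu\in\mathcal{M}(\mathbb{R}^d)$ the law of $X$ and $r\in\mathbb{R}^d_{>0}$, the average entropy is $H(\mu;r):=\int_{[0,1)^d}H(\lfloor X/r+x\rfloor)\,dx$, where $X/r$ and the floor are coordinatewise and $H(\cdot)$ is Shannon entropy (log base 2). *)

theory Defs
  imports "HOL-Probability.Probability"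
begin

definition cs_prob :: "(real ^ 'n) measure \<Rightarrow> bool" where
  "cs_prob M \<longleftrightarrow> prob_space M \<and> sets M = sets borel \<and>
     (\<exists>K. compact K \<and> emeasure M K = 1)"

fun conv_pow :: "(real ^ 'n) measure \<Rightarrow> nat \<Rightarrow> (real ^ 'n) measure" where
  "conv_pow N 0 = return borel 0"
| "conv_pow N (Suc k) = convolution N (conv_pow N k)"

definition floor_cell :: "real ^ 'n \<Rightarrow> real ^ 'n \<Rightarrow> real ^ 'n \<Rightarrow> int ^ 'n" where
  "floor_cell r x y = (\<chi> i. \<lfloor>y $ i / r $ i + x $ i\<rfloor>)"

text \<open>Shannon entropy (log base 2) of the discrete random variable floor(X/r + x), X ~ M.
  Note log 2 0 = 0 in Isabelle, giving the convention 0 log 0 = 0.\<close>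
definition cell_entropy :: "(real ^ 'n) measure \<Rightarrow> real ^ 'n \<Rightarrow> real ^ 'n \<Rightarrow> real" where
  "cell_entropy M r x =
     (\<Sum>\<^sub>\<infinity>z::int ^ 'n. - (measure M {y \<in> space M. floor_cell r x y = z}
        * log 2 (measure M {y \<in> space M. floor_cell r x y = z})))"

definition avg_entropy :: "(real ^ 'n) measure \<Rightarrow> real ^ 'n \<Rightarrow> real" where
  "avg_entropy M r = (LINT x : {x. \<forall>i. 0 \<le> x $ i \<and> x $ i < 1} | lborel. cell_entropy M r x)"

end

theory Submission
  imports Defs
begin


definition sc :: "real^'n \<Rightarrow> real^'n \<Rightarrow> real^'n" where "sc r y = (\<chi> i. y$i / r$i)"
definition bx :: "real^'n \<Rightarrow> real^'n \<Rightarrow> (real^'n) set" where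
  "bx r v = {y. \<forall>i. v$i \<le> y$i / r$i \<and> y$i / r$i < v$i + 1}"
definition GG :: "(real^'n) measure \<Rightarrow> real^'n \<Rightarrow> real^'n \<Rightarrow> real" where
  "GG M r v = measure M (bx r v)"

lemma nth_meas[measurable (raw)]:
  "f \<in> borel_measurable M \<Longrightarrow> (\<lambda>x. (f x :: real^'n) $ i) \<in> borel_measurable M"
  using measurable_compose[OF _ borel_measurable_nth] by blast

lemma bx_sets[measurable]: "bx r v \<in> sets borel"
  unfolding bx_def by measurable

lemma pred_bx[measurable]: "Measurable.pred (borel \<Otimes>\<^sub>M borel) (\<lambda>(v::real^'n, y). y \<in> bx r v)"
  unfolding bx_def by measurable

lemma GG_meas[measurable]:
  assumes "finite_measure M" "sets M = sets borel"
  shows "GG M r \<in> borel_measurable borel"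
proof -
  interpret finite_measure M by fact
  have sp: "space M = UNIV" using sets_eq_imp_space_eq[OF assms(2)] by simp
  have "(\<lambda>v. measure M (bx r v)) \<in> borel_measurable borel"
  proof (rule measurable_measure)
    show "\<And>x. x \<in> space borel \<Longrightarrow> bx r x \<subseteq> space M" using sets_eq_imp_space_eq[OF assms(2)] by simp
    have "{x \<in> space (borel \<Otimes>\<^sub>M M). snd x \<in> bx r (fst x)} = {x \<in> space (borel \<Otimes>\<^sub>M borel). snd x \<in> bx r (fst x)}"
      using sp by (simp add: space_pair_measure)
    also have "\<dots> \<in> sets (borel \<Otimes>\<^sub>M borel)"
      using pred_bx[of r] by (simp add: case_prod_beta pred_def)
    finally have X: "{x \<in> space (borel \<Otimes>\<^sub>M M). snd x \<in> bx r (fst x)} \<in> sets (borel \<Otimes>\<^sub>M borel)" .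
    have e: "sets (borel \<Otimes>\<^sub>M M) = sets (borel \<Otimes>\<^sub>M borel)" by (rule sets_pair_measure_cong[OF refl assms(2)])
    show "{x \<in> space (borel \<Otimes>\<^sub>M M). snd x \<in> bx r (fst x)} \<in> sets (borel \<Otimes>\<^sub>M M)"
      unfolding e by (rule X)
  qed
  then show ?thesis unfolding GG_def[abs_def] .
qed



lemma sc_cont: "continuous_on UNIV (sc r)"
  unfolding sc_def divide_inverse by (intro continuous_intros)

lemma sc_meas[measurable]: "sc r \<in> borel_measurable borel"
  using sc_cont by (rule borel_measurable_continuous_onI)

lemma sc_add: "sc r (x + y) = sc r x + sc r y"
  unfolding sc_def by (simp add: vec_eq_iff add_divide_distrib)

lemma bx_shift: "{a. a + x \<in> bx r v} = bx r (v - sc r x)"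
  unfolding bx_def sc_def by (auto simp: add_divide_distrib algebra_simps)

lemma GG_nonneg: "0 \<le> GG M r v" unfolding GG_def by simp

lemma GG_le1: "prob_space M \<Longrightarrow> GG M r v \<le> 1"
  unfolding GG_def by (rule prob_space.prob_le_1)

lemma GG_conv:
  assumes "finite_measure M" "finite_measure N" "sets M = sets borel" "sets N = sets borel"
  shows "ennreal (GG (convolution M N) r v) = (\<integral>\<^sup>+ y. ennreal (GG M r (v - sc r y)) \<partial>N)"
proof -
  have spM: "space M = UNIV" using sets_eq_imp_space_eq[OF assms(3)] by simp
  have spN: "space N = UNIV" using sets_eq_imp_space_eq[OF assms(4)] by simp
  have comm: "convolution M N = convolution N M" by (rule convolution_commutative) (use assms in auto)
  have fin: "finite_measure (convolution N M)" by (rule convolution_finite) (use assms in auto)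
  have "ennreal (GG (convolution M N) r v) = emeasure (convolution N M) (bx r v)"
    unfolding GG_def comm using finite_measure.emeasure_eq_measure[OF fin] by simp
  also have "\<dots> = (\<integral>\<^sup>+ x. emeasure M {a. a + x \<in> bx r v} \<partial>N)"
    by (rule convolution_emeasure) (use assms spM spN in auto)
  also have "\<dots> = (\<integral>\<^sup>+ y. ennreal (GG M r (v - sc r y)) \<partial>N)"
    unfolding bx_shift GG_def using finite_measure.emeasure_eq_measure[OF assms(1)] by simp
  finally show ?thesis .
qed

lemma lborel_transl:
  fixes F :: "real^'n \<Rightarrow> ennreal"
  assumes [measurable]: "F \<in> borel_measurable borel"
  shows "(\<integral>\<^sup>+ v. F (v - w) \<partial>lborel) = (\<integral>\<^sup>+ v. F v \<partial>lborel)"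
proof -
  have "(\<integral>\<^sup>+ v. F v \<partial>lborel) = (\<integral>\<^sup>+ v. F v \<partial>distr lborel borel ((+) (-w)))"
    by (simp add: lborel_distr_plus)
  also have "\<dots> = (\<integral>\<^sup>+ v. F (-w + v) \<partial>lborel)"
    by (subst nn_integral_distr) auto
  finally show ?thesis by simp
qed



definition nlg :: "real \<Rightarrow> ennreal" where "nlg q = (if q \<le> 0 then \<infinity> else ennreal (- ln q))"
definition bt :: "real \<Rightarrow> real \<Rightarrow> ennreal" where "bt p q = ennreal p * nlg q"

lemma nlg_meas[measurable]: "nlg \<in> borel_measurable borel"
  unfolding nlg_def by measurable

lemma nlg_meas'[measurable (raw)]: "f \<in> borel_measurable M \<Longrightarrow> (\<lambda>x. nlg (f x)) \<in> borel_measurable M"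
  using measurable_compose[OF _ nlg_meas] by blast

lemma bt_meas'[measurable (raw)]:
  "f \<in> borel_measurable M \<Longrightarrow> g \<in> borel_measurable M \<Longrightarrow> (\<lambda>x. bt (f x) (g x)) \<in> borel_measurable M"
  unfolding bt_def by (intro borel_measurable_times_ennreal measurable_compose[OF _ nlg_meas]) measurable

lemma plnp_bounds:
  fixes p :: real assumes "0 \<le> p" "p \<le> 1"
  shows "0 \<le> - (p * ln p)" "- (p * ln p) \<le> 1"
proof -
  show "0 \<le> - (p * ln p)"
  proof (cases "p = 0")
    case False then have "ln p \<le> 0" using assms by simp
    then show ?thesis using assms by (simp add: mult_nonneg_nonpos)
  qed simp
  show "- (p * ln p) \<le> 1"
  proof (cases "p = 0")
    case False
    then have pp: "0 < p" using assms by simp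
    have "ln (1/p) \<le> 1/p - 1" using pp by (intro ln_le_minus_one) simp
    then have "- ln p \<le> 1/p - 1" using pp by (simp add: ln_div)
    then have "p * (- ln p) \<le> p * (1/p - 1)" using pp by (intro mult_left_mono) auto
    moreover have "p * (1/p - 1) = 1 - p" using pp by (simp add: field_simps)
    ultimately show ?thesis using pp assms by simp
  qed simp
qed

lemma bt_eq:
  assumes "0 \<le> p" "0 < q" "q \<le> 1"
  shows "bt p q = ennreal (- (p * ln q))"
proof -
  have "0 \<le> - ln q" using assms by simp
  then show ?thesis unfolding bt_def nlg_def using assms by (simp add: ennreal_mult[symmetric])
qed

lemma bt_same: assumes "0 \<le> p" "p \<le> 1" shows "bt p p = ennreal (- (p * ln p))"
proof (cases "p = 0")
  case False then show ?thesis using assms by (intro bt_eq) auto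
qed (simp add: bt_def nlg_def)

lemma tangent:
  fixes p q P Q :: real
  assumes "0 \<le> p" "0 \<le> q" "p > 0 \<longrightarrow> q > 0" "P > 0" "Q > 0"
  shows "p * ln p - p * ln q \<ge> p * ln (P/Q) + p - q * P / Q"
proof (cases "p = 0")
  case True then show ?thesis using assms by simp
next
  case False
  then have pp: "p > 0" and qp: "q > 0" using assms by auto
  define x where "x = p * Q / (q * P)"
  have xp: "x > 0" unfolding x_def using pp qp assms by simp
  have "ln (1/x) \<le> 1/x - 1" using xp by (intro ln_le_minus_one) simp
  then have l: "- ln x \<le> 1/x - 1" using xp by (simp add: ln_div)
  have lx: "ln x = ln p + ln Q - ln q - ln P"
    unfolding x_def using pp qp assms by (simp add: ln_div ln_mult)
  have "p * (- ln x) \<le> p * (1/x - 1)" using l pp by (intro mult_left_mono) auto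
  moreover have "p * (1/x) = q * P / Q" unfolding x_def using pp qp assms by (simp add: field_simps)
  moreover have "p * ln (P/Q) = p * ln P - p * ln Q" using assms by (simp add: ln_div right_diff_distrib)
  moreover have "p * ln x = p * ln p + p * ln Q - p * ln q - p * ln P" unfolding lx by (simp add: algebra_simps)
  moreover have "p * (1/x - 1) = p * (1/x) - p" by (simp add: algebra_simps)
  ultimately show ?thesis by linarith
qed



lemma pointwise:
  fixes b :: "'a measure" and p q :: "'a \<Rightarrow> real"
  assumes pb: "prob_space b"
    and [measurable]: "p \<in> borel_measurable b" "q \<in> borel_measurable b"
    and p01: "\<And>t. 0 \<le> p t \<and> p t \<le> 1" and q01: "\<And>t. 0 \<le> q t \<and> q t \<le> 1"
    and PP: "ennreal P = (\<integral>\<^sup>+ t. ennreal (p t) \<partial>b)" and QQ: "ennreal Q = (\<integral>\<^sup>+ t. ennreal (q t) \<partial>b)"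
    and P0: "0 \<le> P" and Q0: "0 \<le> Q"
  shows "bt P Q + (\<integral>\<^sup>+ t. bt (p t) (p t) \<partial>b) \<le> (\<integral>\<^sup>+ t. bt (p t) (q t) \<partial>b) + bt P P"
proof -
  interpret prob_space b by fact
  have ip: "integrable b p" by (rule integrable_const_bound[where B=1]) (use p01 in auto)
  have iq: "integrable b q" by (rule integrable_const_bound[where B=1]) (use q01 in auto)
  have Pe: "P = integral\<^sup>L b p"
    using PP nn_integral_eq_integral[OF ip] p01 P0 integral_nonneg by (simp add: ennreal_inj)
  have Qe: "Q = integral\<^sup>L b q"
    using QQ nn_integral_eq_integral[OF iq] q01 Q0 integral_nonneg by (simp add: ennreal_inj)
  show ?thesis
  proof (cases "(\<integral>\<^sup>+ t. bt (p t) (q t) \<partial>b) = \<infinity>")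
    case True then show ?thesis by simp
  next
    case False
    have ae1: "AE t in b. bt (p t) (q t) \<noteq> \<infinity>"
      by (rule nn_integral_PInf_AE) (use False in auto)
    have ae2: "AE t in b. p t > 0 \<longrightarrow> q t > 0"
      using ae1
    proof eventually_elim
      case (elim t)
      show ?case
      proof
        assume pt: "p t > 0"
        show "q t > 0"
        proof (rule ccontr)
          assume "\<not> q t > 0"
          then have "nlg (q t) = \<infinity>" by (simp add: nlg_def)
          then have "bt (p t) (q t) = \<infinity>" using pt by (simp add: bt_def ennreal_mult_top)
          then show False using elim by simp
        qed
      qed
    qed
    define A where "A t = - (p t * ln (p t))" for t
    define B where "B t = - (p t * ln (q t))" for t
    have [measurable]: "A \<in> borel_measurable b" "B \<in> borel_measurable b"
      unfolding A_def[abs_def] B_def[abs_def] by measurable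
    have A01: "0 \<le> A t \<and> A t \<le> 1" for t using plnp_bounds p01 unfolding A_def by auto
    have B0: "0 \<le> B t" for t
    proof (cases "q t = 0")
      case False then have "ln (q t) \<le> 0" using q01[of t] by simp
      then show ?thesis unfolding B_def using p01 by (simp add: mult_nonneg_nonpos)
    qed (simp add: B_def)
    have eA: "bt (p t) (p t) = ennreal (A t)" for t unfolding A_def using p01 by (simp add: bt_same)
    have eB: "AE t in b. bt (p t) (q t) = ennreal (B t)"
      using ae2
    proof eventually_elim
      case (elim t)
      show ?case
      proof (cases "q t > 0")
        case True then show ?thesis unfolding B_def using p01 q01 by (simp add: bt_eq)
      next
        case False then have "p t = 0" using elim p01[of t] by auto
        then show ?thesis by (simp add: bt_def B_def)
      qed
    qed
    have nB: "(\<integral>\<^sup>+ t. bt (p t) (q t) \<partial>b) = (\<integral>\<^sup>+ t. ennreal (B t) \<partial>b)"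
      by (rule nn_integral_cong_AE) (rule eB)
    have iB: "integrable b B"
      by (rule integrableI_nonneg) (use B0 nB False in \<open>auto simp: top.not_eq_extremum\<close>)
    have iA: "integrable b A" by (rule integrable_const_bound[where B=1]) (use A01 in auto)
    have nB': "(\<integral>\<^sup>+ t. bt (p t) (q t) \<partial>b) = ennreal (integral\<^sup>L b B)"
      using nB nn_integral_eq_integral[OF iB] B0 by simp
    have nA': "(\<integral>\<^sup>+ t. bt (p t) (p t) \<partial>b) = ennreal (integral\<^sup>L b A)"
      using nn_integral_eq_integral[OF iA] A01 by (simp add: eA)
    show ?thesis
    proof (cases "P = 0")
      case True
      then have "AE t in b. p t = 0" using integral_nonneg_eq_0_iff_AE[OF ip] p01 Pe by simp
      then have "AE t in b. A t = 0" by eventually_elim (simp add: A_def)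
      then have iA0: "integral\<^sup>L b A = 0" by (simp add: integral_eq_zero_AE)
      have "bt P Q = 0" using True by (simp add: bt_def)
      then show ?thesis unfolding nA' iA0 by simp
    next
      case False
      then have Pp: "P > 0" using P0 by simp
      have Qp: "Q > 0"
      proof (rule ccontr)
        assume "\<not> Q > 0"
        then have "Q = 0" using Q0 by simp
        then have "AE t in b. q t = 0" using integral_nonneg_eq_0_iff_AE[OF iq] q01 Qe by simp
        then have "AE t in b. p t = 0" using ae2 by eventually_elim (smt (verit) p01)
        then have "integral\<^sup>L b p = 0" by (simp add: integral_eq_zero_AE)
        then show False using Pp Pe by simp
      qed
      have P1: "P \<le> 1" unfolding Pe using integral_mono[OF ip, of "\<lambda>_. 1"] p01 by (simp add: prob_space)
      have Q1: "Q \<le> 1" unfolding Qe using integral_mono[OF iq, of "\<lambda>_. 1"] q01 by (simp add: prob_space)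
      define c where "c = ln (P/Q)"
      have tan: "AE t in b. B t - A t \<ge> p t * c + p t - q t * P / Q"
        using ae2 by eventually_elim (use p01 q01 Pp Qp tangent in \<open>auto simp: A_def B_def c_def\<close>)
      have il: "integrable b (\<lambda>t. p t * c + p t - q t * P / Q)"
        using ip iq by (intro Bochner_Integration.integrable_diff Bochner_Integration.integrable_add) auto
      have "integral\<^sup>L b (\<lambda>t. p t * c + p t - q t * P / Q) \<le> integral\<^sup>L b (\<lambda>t. B t - A t)"
        by (rule integral_mono_AE[OF il _ tan]) (use iA iB in auto)
      moreover have "integral\<^sup>L b (\<lambda>t. p t * c + p t - q t * P / Q) = P * c + P - Q * P / Q"
        using ip iq Pe Qe by simp
      moreover have "integral\<^sup>L b (\<lambda>t. B t - A t) = integral\<^sup>L b B - integral\<^sup>L b A"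
        using iA iB by simp
      moreover have "P * c = P * ln P - P * ln Q" unfolding c_def using Pp Qp by (simp add: ln_div right_diff_distrib)
      ultimately have key: "- (P * ln Q) + integral\<^sup>L b A \<le> integral\<^sup>L b B + - (P * ln P)"
        using Qp by simp
      have lq: "0 \<le> - (P * ln Q)" using Pp Qp Q1 by (simp add: mult_nonneg_nonpos)
      have lp: "0 \<le> - (P * ln P)" using Pp P1 by (simp add: mult_nonneg_nonpos)
      have iA0: "0 \<le> integral\<^sup>L b A" using A01 by (simp add: integral_nonneg)
      have iB0: "0 \<le> integral\<^sup>L b B" using B0 by (simp add: integral_nonneg)
      have "bt P Q + (\<integral>\<^sup>+ t. bt (p t) (p t) \<partial>b) = ennreal (- (P * ln Q) + integral\<^sup>L b A)"
        using Pp Qp Q1 ennreal_plus[OF lq iA0] by (simp add: nA' bt_eq)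
      also have "\<dots> \<le> ennreal (integral\<^sup>L b B + - (P * ln P))"
        using key by (rule ennreal_leI)
      also have "\<dots> = (\<integral>\<^sup>+ t. bt (p t) (q t) \<partial>b) + bt P P"
        using Pp P1 ennreal_plus[OF iB0 lp] by (simp add: nB' bt_eq)
      finally show ?thesis .
    qed
  qed
qed



lemma sc_meas'[measurable (raw)]: "F \<in> borel_measurable M \<Longrightarrow> (\<lambda>x. sc r (F x)) \<in> borel_measurable M"
  using measurable_compose[OF _ sc_meas] by blast

lemma nn_swap:
  assumes "sigma_finite_measure M1" "sigma_finite_measure M2"
    and "case_prod F \<in> borel_measurable (M1 \<Otimes>\<^sub>M M2)"
  shows "(\<integral>\<^sup>+ x. \<integral>\<^sup>+ y. F x y \<partial>M2 \<partial>M1) = (\<integral>\<^sup>+ y. \<integral>\<^sup>+ x. F x y \<partial>M1 \<partial>M2)"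
proof -
  interpret pair_sigma_finite M1 M2 using assms(1,2) by (simp add: pair_sigma_finite_def)
  show ?thesis using Fubini'[OF assms(3)] by simp
qed

lemma Tr:
  fixes X :: "real^'n \<Rightarrow> ennreal" and c :: "(real^'n) measure"
  assumes pc: "prob_space c" and sc[measurable_cong]: "sets c = sets borel"
    and [measurable]: "X \<in> borel_measurable borel"
  shows "(\<integral>\<^sup>+ v. \<integral>\<^sup>+ y. X (v - sc r y) \<partial>c \<partial>lborel) = (\<integral>\<^sup>+ v. X v \<partial>lborel)"
proof -
  interpret prob_space c by fact
  have "(\<integral>\<^sup>+ v. \<integral>\<^sup>+ y. X (v - sc r y) \<partial>c \<partial>lborel) = (\<integral>\<^sup>+ y. \<integral>\<^sup>+ v. X (v - sc r y) \<partial>lborel \<partial>c)"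
    by (rule nn_swap) (auto simp: sigma_finite_lborel prob_space_imp_sigma_finite pc)
  also have "\<dots> = (\<integral>\<^sup>+ y. (\<integral>\<^sup>+ v. X v \<partial>lborel) \<partial>c)"
    by (simp add: lborel_transl)
  also have "\<dots> = (\<integral>\<^sup>+ v. X v \<partial>lborel)" by (simp add: emeasure_space_1)
  finally show ?thesis .
qed

definition Ent' :: "(real^'n \<Rightarrow> real) \<Rightarrow> ennreal" where
  "Ent' u = (\<integral>\<^sup>+ v. bt (u v) (u v) \<partial>lborel)"

lemma Bid:
  fixes u w :: "real^'n \<Rightarrow> real" and c :: "(real^'n) measure"
  assumes [measurable_cong]: "sets c = sets borel"
    and [measurable]: "u \<in> borel_measurable borel"
    and F: "\<And>v. ennreal (w v) = (\<integral>\<^sup>+ y. ennreal (u (v - sc r y)) \<partial>c)"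
  shows "(\<integral>\<^sup>+ v. \<integral>\<^sup>+ y. bt (u (v - sc r y)) (w v) \<partial>c \<partial>lborel) = Ent' w"
  unfolding Ent'_def bt_def
  by (rule nn_integral_cong) (simp add: nn_integral_multc F)



lemma nn_add2:
  fixes A B :: "'a \<Rightarrow> 'b \<Rightarrow> ennreal"
  assumes sf: "sigma_finite_measure c"
    and mA: "case_prod A \<in> borel_measurable (M \<Otimes>\<^sub>M c)" and mB: "case_prod B \<in> borel_measurable (M \<Otimes>\<^sub>M c)"
  shows "(\<integral>\<^sup>+v. \<integral>\<^sup>+y. A v y \<partial>c \<partial>M) + (\<integral>\<^sup>+v. \<integral>\<^sup>+y. B v y \<partial>c \<partial>M) = (\<integral>\<^sup>+v. \<integral>\<^sup>+y. A v y + B v y \<partial>c \<partial>M)"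
proof -
  have m1: "(\<lambda>v. \<integral>\<^sup>+y. A v y \<partial>c) \<in> borel_measurable M"
    by (rule sigma_finite_measure.borel_measurable_nn_integral[OF sf mA])
  have m2: "(\<lambda>v. \<integral>\<^sup>+y. B v y \<partial>c) \<in> borel_measurable M"
    by (rule sigma_finite_measure.borel_measurable_nn_integral[OF sf mB])
  have "(\<integral>\<^sup>+v. \<integral>\<^sup>+y. A v y \<partial>c \<partial>M) + (\<integral>\<^sup>+v. \<integral>\<^sup>+y. B v y \<partial>c \<partial>M)
     = (\<integral>\<^sup>+v. (\<integral>\<^sup>+y. A v y \<partial>c) + (\<integral>\<^sup>+y. B v y \<partial>c) \<partial>M)"
    by (rule nn_integral_add[symmetric, OF m1 m2])
  also have "\<dots> = (\<integral>\<^sup>+v. \<integral>\<^sup>+y. A v y + B v y \<partial>c \<partial>M)"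
  proof (rule nn_integral_cong)
    fix v assume v: "v \<in> space M"
    have "(\<lambda>y. A v y) \<in> borel_measurable c" using measurable_Pair2[OF mA v] by simp
    moreover have "(\<lambda>y. B v y) \<in> borel_measurable c" using measurable_Pair2[OF mB v] by simp
    ultimately show "(\<integral>\<^sup>+y. A v y \<partial>c) + (\<integral>\<^sup>+y. B v y \<partial>c) = (\<integral>\<^sup>+y. A v y + B v y \<partial>c)"
      by (rule nn_integral_add[symmetric])
  qed
  finally show ?thesis .
qed

lemma core_abs:
  fixes f g h k :: "real^'n \<Rightarrow> real" and b c :: "(real^'n) measure"
  assumes pb: "prob_space b" and pc: "prob_space c"
    and sb[measurable_cong]: "sets b = sets borel" and scc[measurable_cong]: "sets c = sets borel"
    and [measurable]: "f \<in> borel_measurable borel" "g \<in> borel_measurable borel"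
       "h \<in> borel_measurable borel" "k \<in> borel_measurable borel"
    and f01: "\<And>v. 0 \<le> f v \<and> f v \<le> 1" and g01: "\<And>v. 0 \<le> g v \<and> g v \<le> 1"
    and h01: "\<And>v. 0 \<le> h v \<and> h v \<le> 1" and k01: "\<And>v. 0 \<le> k v \<and> k v \<le> 1"
    and Fg: "\<And>v. ennreal (g v) = (\<integral>\<^sup>+ y. ennreal (f (v - sc r y)) \<partial>c)"
    and Fh: "\<And>v. ennreal (h v) = (\<integral>\<^sup>+ t. ennreal (f (v - sc r t)) \<partial>b)"
    and Fk1: "\<And>v. ennreal (k v) = (\<integral>\<^sup>+ y. ennreal (h (v - sc r y)) \<partial>c)"
    and Fk2: "\<And>v. ennreal (k v) = (\<integral>\<^sup>+ t. ennreal (g (v - sc r t)) \<partial>b)"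
  shows "Ent' k + Ent' f \<le> Ent' g + Ent' h"
proof -
  have sfb: "sigma_finite_measure b" using pb by (simp add: prob_space_imp_sigma_finite)
  have sfc: "sigma_finite_measure c" using pc by (simp add: prob_space_imp_sigma_finite)
  define X where "X w = (\<integral>\<^sup>+ t. bt (f (w - sc r t)) (f (w - sc r t)) \<partial>b)" for w
  have [measurable]: "X \<in> borel_measurable borel"
    unfolding X_def by (rule sigma_finite_measure.borel_measurable_nn_integral[OF sfb]) measurable
  have EF: "Ent' f = (\<integral>\<^sup>+ v. \<integral>\<^sup>+ y. X (v - sc r y) \<partial>c \<partial>lborel)"
  proof -
    have "(\<integral>\<^sup>+ v. \<integral>\<^sup>+ y. X (v - sc r y) \<partial>c \<partial>lborel) = (\<integral>\<^sup>+ v. X v \<partial>lborel)"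
      by (rule Tr[OF pc scc]) measurable
    also have "\<dots> = Ent' f" unfolding X_def Ent'_def by (rule Tr[OF pb sb]) measurable
    finally show ?thesis by simp
  qed
  have EK: "Ent' k = (\<integral>\<^sup>+ v. \<integral>\<^sup>+ y. bt (h (v - sc r y)) (k v) \<partial>c \<partial>lborel)"
    by (rule Bid[symmetric]) (use Fk1 scc in auto)
  have EH: "Ent' h = (\<integral>\<^sup>+ v. \<integral>\<^sup>+ y. bt (h (v - sc r y)) (h (v - sc r y)) \<partial>c \<partial>lborel)"
    unfolding Ent'_def by (rule Tr[OF pc scc, symmetric]) measurable
  define Y where "Y w = (\<integral>\<^sup>+ y. bt (f (w - sc r y)) (g w) \<partial>c)" for w
  have [measurable]: "Y \<in> borel_measurable borel"
    unfolding Y_def by (rule sigma_finite_measure.borel_measurable_nn_integral[OF sfc]) measurable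
  have EG0: "Ent' g = (\<integral>\<^sup>+ v. Y v \<partial>lborel)"
    unfolding Y_def by (rule Bid[symmetric]) (use Fg scc in auto)
  have EG: "Ent' g = (\<integral>\<^sup>+ v. \<integral>\<^sup>+ y. \<integral>\<^sup>+ t. bt (f (v - sc r y - sc r t)) (g (v - sc r t)) \<partial>b \<partial>c \<partial>lborel)"
  proof -
    have "Ent' g = (\<integral>\<^sup>+ v. \<integral>\<^sup>+ t. Y (v - sc r t) \<partial>b \<partial>lborel)"
      unfolding EG0 by (rule Tr[OF pb sb, symmetric]) measurable
    also have "\<dots> = (\<integral>\<^sup>+ v. \<integral>\<^sup>+ t. \<integral>\<^sup>+ y. bt (f (v - sc r y - sc r t)) (g (v - sc r t)) \<partial>c \<partial>b \<partial>lborel)"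
      unfolding Y_def by (simp add: algebra_simps)
    also have "\<dots> = (\<integral>\<^sup>+ v. \<integral>\<^sup>+ y. \<integral>\<^sup>+ t. bt (f (v - sc r y - sc r t)) (g (v - sc r t)) \<partial>b \<partial>c \<partial>lborel)"
      by (rule nn_integral_cong) (rule nn_swap[OF sfb sfc], measurable)
    finally show ?thesis .
  qed
  have pw: "bt (h (v - sc r y)) (k v) + X (v - sc r y)
     \<le> (\<integral>\<^sup>+ t. bt (f (v - sc r y - sc r t)) (g (v - sc r t)) \<partial>b) + bt (h (v - sc r y)) (h (v - sc r y))" for v y
    unfolding X_def
  proof (rule pointwise[OF pb])
    show "(\<lambda>t. f (v - sc r y - sc r t)) \<in> borel_measurable b" by measurable
    show "(\<lambda>t. g (v - sc r t)) \<in> borel_measurable b" by measurable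
    show "0 \<le> f (v - sc r y - sc r t) \<and> f (v - sc r y - sc r t) \<le> 1" for t using f01 by blast
    show "0 \<le> g (v - sc r t) \<and> g (v - sc r t) \<le> 1" for t using g01 by blast
    show "ennreal (h (v - sc r y)) = (\<integral>\<^sup>+ t. ennreal (f (v - sc r y - sc r t)) \<partial>b)" by (rule Fh)
    show "ennreal (k v) = (\<integral>\<^sup>+ t. ennreal (g (v - sc r t)) \<partial>b)" by (rule Fk2)
    show "0 \<le> h (v - sc r y)" using h01 by blast
    show "0 \<le> k v" using k01 by blast
  qed
  have "Ent' k + Ent' f = (\<integral>\<^sup>+ v. \<integral>\<^sup>+ y. bt (h (v - sc r y)) (k v) + X (v - sc r y) \<partial>c \<partial>lborel)"
    unfolding EK EF by (rule nn_add2[OF sfc]) measurable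
  also have "\<dots> \<le> (\<integral>\<^sup>+ v. \<integral>\<^sup>+ y. (\<integral>\<^sup>+ t. bt (f (v - sc r y - sc r t)) (g (v - sc r t)) \<partial>b)
        + bt (h (v - sc r y)) (h (v - sc r y)) \<partial>c \<partial>lborel)"
    by (intro nn_integral_mono pw)
  also have "\<dots> = Ent' g + Ent' h"
    unfolding EG EH
  proof (rule nn_add2[OF sfc, symmetric])
    show "(\<lambda>(v, y). \<integral>\<^sup>+ t. bt (f (v - sc r y - sc r t)) (g (v - sc r t)) \<partial>b) \<in> borel_measurable (lborel \<Otimes>\<^sub>M c)"
      using sigma_finite_measure.borel_measurable_nn_integral[OF sfb,
          of "\<lambda>vy t. bt (f (fst vy - sc r (snd vy) - sc r t)) (g (fst vy - sc r t))" "lborel \<Otimes>\<^sub>M c"]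
      by (simp add: case_prod_beta) measurable
  qed measurable
  finally show ?thesis .
qed



lemma conv_prob:
  assumes "prob_space M" "prob_space N" "sets M = sets borel" "sets N = sets borel"
  shows "prob_space (convolution M N)"
proof -
  interpret pair_prob_space M N using assms(1,2) by (simp add: pair_prob_space_def pair_sigma_finite_def prob_space_imp_sigma_finite)
  have m: "(\<lambda>(x::'a, y). x + y) \<in> measurable (M \<Otimes>\<^sub>M N) borel"
    using assms(3,4) by (simp add: measurable_cong_sets[OF sets_pair_measure_cong[OF assms(3,4)] refl])
  show ?thesis unfolding convolution_def by (rule prob_space_distr[OF m])
qed

lemma core_meas:
  fixes a b c :: "(real^'n) measure"
  assumes pa: "prob_space a" and pb: "prob_space b" and pc: "prob_space c"
    and sa: "sets a = sets borel" and sb: "sets b = sets borel" and scc: "sets c = sets borel"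
  shows "Ent' (GG (convolution (convolution a b) c) r) + Ent' (GG a r)
       \<le> Ent' (GG (convolution a c) r) + Ent' (GG (convolution a b) r)"
proof -
  have fa: "finite_measure a" "finite_measure b" "finite_measure c"
    using pa pb pc by (auto simp: prob_space_def)
  have pab: "prob_space (convolution a b)" by (rule conv_prob) (use pa pb sa sb in auto)
  have pac: "prob_space (convolution a c)" by (rule conv_prob) (use pa pc sa scc in auto)
  have pabc: "prob_space (convolution (convolution a b) c)" by (rule conv_prob) (use pab pc scc in auto)
  have fab: "finite_measure (convolution a b)" and fac: "finite_measure (convolution a c)"
    using pab pac by (auto simp: prob_space_def)
  have swap: "convolution (convolution a b) c = convolution (convolution a c) b"
  proof -
    have "convolution (convolution a b) c = convolution a (convolution b c)"
      by (rule convolution_associative[symmetric]) (use fa sa sb scc in auto)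
    also have "convolution b c = convolution c b"
      by (rule convolution_commutative) (use fa sb scc in auto)
    also have "convolution a (convolution c b) = convolution (convolution a c) b"
      by (rule convolution_associative) (use fa sa sb scc in auto)
    finally show ?thesis .
  qed
  show ?thesis
  proof (rule core_abs[OF pb pc sb scc])
    show "GG a r \<in> borel_measurable borel" by (rule GG_meas) (use fa sa in auto)
    show "GG (convolution a c) r \<in> borel_measurable borel" by (rule GG_meas) (use fac in auto)
    show "GG (convolution a b) r \<in> borel_measurable borel" by (rule GG_meas) (use fab in auto)
    show "GG (convolution (convolution a b) c) r \<in> borel_measurable borel"
      by (rule GG_meas) (use pabc in \<open>auto simp: prob_space_def\<close>)
    show "0 \<le> GG a r v \<and> GG a r v \<le> 1" for v using GG_nonneg GG_le1[OF pa] by auto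
    show "0 \<le> GG (convolution a c) r v \<and> GG (convolution a c) r v \<le> 1" for v using GG_nonneg GG_le1[OF pac] by auto
    show "0 \<le> GG (convolution a b) r v \<and> GG (convolution a b) r v \<le> 1" for v using GG_nonneg GG_le1[OF pab] by auto
    show "0 \<le> GG (convolution (convolution a b) c) r v \<and> GG (convolution (convolution a b) c) r v \<le> 1" for v
      using GG_nonneg GG_le1[OF pabc] by auto
    show "ennreal (GG (convolution a c) r v) = (\<integral>\<^sup>+ y. ennreal (GG a r (v - sc r y)) \<partial>c)" for v
      by (rule GG_conv) (use fa sa scc in auto)
    show "ennreal (GG (convolution a b) r v) = (\<integral>\<^sup>+ y. ennreal (GG a r (v - sc r y)) \<partial>b)" for v
      by (rule GG_conv) (use fa sa sb in auto)
    show "ennreal (GG (convolution (convolution a b) c) r v) = (\<integral>\<^sup>+ y. ennreal (GG (convolution a b) r (v - sc r y)) \<partial>c)" for v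
      by (rule GG_conv) (use fa fab scc in auto)
    show "ennreal (GG (convolution (convolution a b) c) r v) = (\<integral>\<^sup>+ y. ennreal (GG (convolution a c) r (v - sc r y)) \<partial>b)" for v
      unfolding swap by (rule GG_conv) (use fa fac sb in auto)
  qed
qed



lemma lborel_refl:
  fixes F :: "real^'n \<Rightarrow> ennreal"
  assumes [measurable]: "F \<in> borel_measurable borel"
  shows "(\<integral>\<^sup>+ x. F (w - x) \<partial>lborel) = (\<integral>\<^sup>+ v. F v \<partial>lborel)"
proof -
  have d: "distr lborel borel (\<lambda>x. w - x) = (lborel :: (real^'n) measure)"
    using lborel_affine[of "-1::real" w] by (simp add: density_1)
  have "(\<integral>\<^sup>+ v. F v \<partial>lborel) = (\<integral>\<^sup>+ v. F v \<partial>distr lborel borel (\<lambda>x. w - x))"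
    by (simp add: d)
  also have "\<dots> = (\<integral>\<^sup>+ x. F (w - x) \<partial>lborel)"
    by (subst nn_integral_distr) auto
  finally show ?thesis by simp
qed

lemma GG_zero:
  assumes "prob_space M" "sets M = sets borel" "K \<in> sets borel" "emeasure M K = 1" "bx r v \<inter> K = {}"
  shows "GG M r v = 0"
proof -
  interpret prob_space M by fact
  have sp: "space M = UNIV" using sets_eq_imp_space_eq[OF assms(2)] by simp
  have K: "K \<in> events" using assms(2,3) by simp
  have "bx r v \<subseteq> space M - K" using assms(5) sp by auto
  then have "GG M r v \<le> prob (space M - K)" unfolding GG_def
    by (intro finite_measure_mono) (use K in auto)
  also have "\<dots> = 0" using prob_compl[OF K] assms(4) emeasure_eq_measure by simp
  finally show ?thesis using GG_nonneg[of M r v] by simp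
qed

lemma GG_supp:
  assumes cs: "cs_prob M" and rp: "\<forall>i. r$i > 0"
  obtains R where "R \<ge> 0" "\<And>v. GG M r v \<noteq> 0 \<Longrightarrow> \<forall>i. \<bar>v$i\<bar> \<le> R"
proof -
  from cs obtain K where pM: "prob_space M" and sM: "sets M = sets borel" and K: "compact K" "emeasure M K = 1"
    unfolding cs_prob_def by blast
  obtain B where B: "\<And>y. y \<in> K \<Longrightarrow> norm y \<le> B" using compact_imp_bounded[OF K(1)] bounded_iff by blast
  define R where "R = (\<Sum>i\<in>UNIV. \<bar>B\<bar> / r$i) + 1"
  have Rb: "\<bar>B\<bar> / r$i \<le> R - 1" for i
    unfolding R_def using rp by (simp, intro member_le_sum) (auto intro: divide_nonneg_pos less_imp_le)
  have "0 \<le> (\<Sum>i\<in>UNIV. \<bar>B\<bar> / r$i)" by (rule sum_nonneg) (use rp in \<open>auto intro: divide_nonneg_pos less_imp_le\<close>)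
  then have R0: "R \<ge> 0" unfolding R_def by linarith
  show ?thesis
  proof (rule that[OF R0])
    fix v assume "GG M r v \<noteq> 0"
    then have "bx r v \<inter> K \<noteq> {}"
      using GG_zero[OF pM sM _ K(2)] compact_imp_closed[OF K(1)] by auto
    then obtain y where y: "y \<in> K" "y \<in> bx r v" by blast
    show "\<forall>i. \<bar>v$i\<bar> \<le> R"
    proof
      fix i
      have yi: "\<bar>y$i\<bar> \<le> \<bar>B\<bar>" using B[OF y(1)] component_le_norm_cart[of y i] by simp
      have "\<bar>y$i\<bar> / r$i \<le> \<bar>B\<bar> / r$i" using yi rp[rule_format, of i] by (simp add: divide_right_mono)
      moreover have "\<bar>y$i / r$i\<bar> = \<bar>y$i\<bar> / r$i" using rp[rule_format, of i] by (simp add: abs_div)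
      ultimately have a: "\<bar>y$i / r$i\<bar> \<le> R - 1" using Rb[of i] by linarith
      have "v$i \<le> y$i / r$i" "y$i / r$i < v$i + 1" using y(2) unfolding bx_def by auto
      then show "\<bar>v$i\<bar> \<le> R" using a by (smt (verit))
    qed
  qed
qed

lemma Ent_finite:
  fixes M :: "(real^'n) measure"
  assumes cs: "cs_prob M" and rp: "\<forall>i. r$i > 0"
  shows "Ent' (GG M r) < \<infinity>"
proof -
  obtain R where R: "R \<ge> 0" "\<And>v. GG M r v \<noteq> 0 \<Longrightarrow> \<forall>i. \<bar>v$i\<bar> \<le> R" using GG_supp[OF assms] by blast
  from cs have pM: "prob_space M" unfolding cs_prob_def by blast
  define S where "S = {v::real^'n. \<forall>i. \<bar>v$i\<bar> \<le> R}"
  have S[measurable]: "S \<in> sets borel" unfolding S_def by measurable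
  have bS: "bounded S"
    by (rule bounded_subset[OF bounded_cbox[of "- (\<chi> i. R)" "\<chi> i. R"]])
       (auto simp: S_def mem_box_cart abs_le_iff, smt (verit))
  have pt: "bt (GG M r v) (GG M r v) \<le> indicator S v" for v
    proof (cases "GG M r v = 0")
      case True then show ?thesis by (simp add: bt_def)
    next
      case False
      then have "v \<in> S" using R(2) unfolding S_def by blast
      moreover have "bt (GG M r v) (GG M r v) \<le> 1"
      proof -
        have g: "0 \<le> GG M r v" "GG M r v \<le> 1" using GG_nonneg GG_le1[OF pM] by auto
        have "bt (GG M r v) (GG M r v) = ennreal (- (GG M r v * ln (GG M r v)))" by (rule bt_same[OF g])
        also have "\<dots> \<le> ennreal 1" by (rule ennreal_leI) (rule plnp_bounds(2)[OF g])
        finally show ?thesis by simp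
      qed
      ultimately show ?thesis by simp
    qed
  have "Ent' (GG M r) \<le> (\<integral>\<^sup>+ v. indicator S v \<partial>lborel)"
    unfolding Ent'_def by (intro nn_integral_mono pt)
  also have "\<dots> = emeasure lborel S" by simp
  also have "\<dots> < \<infinity>" by (rule emeasure_bounded_finite[OF bS])
  finally show ?thesis .
qed



lemma finite_int_vecs: "finite {z :: int^'n. \<forall>i. \<bar>z$i\<bar> \<le> N}"
proof -
  have "{z :: int^'n. \<forall>i. \<bar>z$i\<bar> \<le> N} \<subseteq> (\<lambda>f. \<chi> i. f i) ` (\<Pi>\<^sub>E i \<in> UNIV. {-N..N})"
  proof
    fix z :: "int^'n" assume "z \<in> {z. \<forall>i. \<bar>z$i\<bar> \<le> N}"
    then have "(\<lambda>i. z$i) \<in> (\<Pi>\<^sub>E i \<in> UNIV. {-N..N})" by (auto simp: abs_le_iff minus_le_iff)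
    moreover have "z = (\<chi> i. (\<lambda>i. z$i) i)" by simp
    ultimately show "z \<in> (\<lambda>f. \<chi> i. f i) ` (\<Pi>\<^sub>E i \<in> UNIV. {-N..N})" by blast
  qed
  moreover have "finite ((\<lambda>f. \<chi> i. f i) ` (\<Pi>\<^sub>E i \<in> (UNIV::'n set). {-N..N}))"
    by (intro finite_imageI finite_PiE) auto
  ultimately show ?thesis by (rule finite_subset)
qed

lemma tiling:
  fixes M :: "(real^'n) measure"
  assumes cs: "cs_prob M" and rp: "\<forall>i. r$i > 0"
  shows "avg_entropy M r = enn2real (Ent' (GG M r)) / ln 2"
proof -
  obtain R where R0: "R \<ge> 0" and Rs: "\<And>v. GG M r v \<noteq> 0 \<Longrightarrow> \<forall>i. \<bar>v$i\<bar> \<le> R" using GG_supp[OF assms] by blast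
  from cs have pM: "prob_space M" and sM: "sets M = sets borel" unfolding cs_prob_def by auto
  have fM: "finite_measure M" using pM by (simp add: prob_space_def)
  have sp: "space M = UNIV" using sets_eq_imp_space_eq[OF sM] by simp
  define N :: int where "N = \<lceil>R\<rceil> + 2"
  define Zs where "Zs = {z :: int^'n. \<forall>i. \<bar>z$i\<bar> \<le> N}"
  have finZ: "finite Zs" unfolding Zs_def by (rule finite_int_vecs)
  define zr where "zr z = (\<chi> i. real_of_int (z$i))" for z :: "int^'n"
  define U where "U = {x::real^'n. \<forall>i. 0 \<le> x$i \<and> x$i < 1}"
  define \<psi> where "\<psi> p = - (p * ln p)" for p :: real
  have GG01: "0 \<le> GG M r v" "GG M r v \<le> 1" for v using GG_nonneg GG_le1[OF pM] by auto
  have \<psi>0: "0 \<le> \<psi> (GG M r v)" for v unfolding \<psi>_def using plnp_bounds(1)[OF GG01] .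
  have cellset: "{y \<in> space M. floor_cell r x y = z} = bx r (zr z - x)" for x z
    unfolding sp floor_cell_def bx_def zr_def by (auto simp: vec_eq_iff floor_eq_iff algebra_simps)
  have out: "GG M r (zr z - x) = 0" if "x \<in> U" "z \<notin> Zs" for x z
  proof (rule ccontr)
    assume "GG M r (zr z - x) \<noteq> 0"
    then have a: "\<bar>(zr z - x)$i\<bar> \<le> R" for i using Rs by blast
    have "\<bar>z$i\<bar> \<le> N" for i
    proof -
      have "\<bar>real_of_int (z$i) - x$i\<bar> \<le> R" using a[of i] by (simp add: zr_def)
      moreover have "0 \<le> x$i" "x$i < 1" using that(1) unfolding U_def by auto
      moreover have "R \<le> of_int \<lceil>R\<rceil>" by (rule le_of_int_ceiling)
      ultimately have "\<bar>real_of_int (z$i)\<bar> \<le> real_of_int \<lceil>R\<rceil> + 2" by (smt (verit))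
      then have "real_of_int \<bar>z$i\<bar> \<le> real_of_int (\<lceil>R\<rceil> + 2)" by simp
      then show ?thesis unfolding N_def of_int_le_iff .
    qed
    then show False using that(2) unfolding Zs_def by auto
  qed
  have ce: "cell_entropy M r x = (\<Sum>z\<in>Zs. \<psi> (GG M r (zr z - x))) / ln 2" if x: "x \<in> U" for x
  proof -
    have "cell_entropy M r x = (\<Sum>\<^sub>\<infinity>z. - (GG M r (zr z - x) * log 2 (GG M r (zr z - x))))"
      unfolding cell_entropy_def cellset GG_def ..
    also have "\<dots> = (\<Sum>\<^sub>\<infinity>z\<in>Zs. - (GG M r (zr z - x) * log 2 (GG M r (zr z - x))))"
      by (rule infsum_cong_neutral) (use out[OF x] in auto)
    also have "\<dots> = (\<Sum>z\<in>Zs. - (GG M r (zr z - x) * log 2 (GG M r (zr z - x))))"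
      using finZ by simp
    also have "\<dots> = (\<Sum>z\<in>Zs. \<psi> (GG M r (zr z - x)) / ln 2)"
      by (rule sum.cong) (auto simp: \<psi>_def log_def)
    also have "\<dots> = (\<Sum>z\<in>Zs. \<psi> (GG M r (zr z - x))) / ln 2"
      by (simp add: sum_divide_distrib)
    finally show ?thesis .
  qed
  define \<Phi> where "\<Phi> x = indicator U x * (\<Sum>z\<in>Zs. \<psi> (GG M r (zr z - x)))" for x
  have [measurable]: "GG M r \<in> borel_measurable borel" by (rule GG_meas[OF fM sM])
  have [measurable]: "U \<in> sets borel" unfolding U_def by measurable
  have [measurable]: "\<Phi> \<in> borel_measurable borel" unfolding \<Phi>_def \<psi>_def by measurable
  have \<Phi>0: "0 \<le> \<Phi> x" for x unfolding \<Phi>_def using \<psi>0 by (simp add: sum_nonneg)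
  have A1: "avg_entropy M r = integral\<^sup>L lborel \<Phi> / ln 2"
  proof -
    have "(\<lambda>x. indicator U x *\<^sub>R cell_entropy M r x) = (\<lambda>x. \<Phi> x / ln 2)"
      by (rule ext) (auto simp: \<Phi>_def ce indicator_def)
    then show ?thesis unfolding avg_entropy_def set_lebesgue_integral_def U_def[symmetric] by simp
  qed
  have A2: "integral\<^sup>L lborel \<Phi> = enn2real (\<integral>\<^sup>+ x. ennreal (\<Phi> x) \<partial>lborel)"
    by (rule integral_eq_nn_integral) (auto simp: \<Phi>0)
  have A3: "(\<integral>\<^sup>+ x. ennreal (\<Phi> x) \<partial>lborel) = (\<integral>\<^sup>+ v. ennreal (\<psi> (GG M r v)) \<partial>lborel)"
  proof -
    have "(\<integral>\<^sup>+ x. ennreal (\<Phi> x) \<partial>lborel)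
        = (\<integral>\<^sup>+ x. (\<Sum>z\<in>Zs. ennreal (indicator U x * \<psi> (GG M r (zr z - x)))) \<partial>lborel)"
      by (rule nn_integral_cong) (simp add: \<Phi>_def sum_distrib_left \<psi>0)
    also have "\<dots> = (\<Sum>z\<in>Zs. (\<integral>\<^sup>+ x. ennreal (indicator U x * \<psi> (GG M r (zr z - x))) \<partial>lborel))"
      by (rule nn_integral_sum) (simp add: \<psi>_def)
    also have "\<dots> = (\<Sum>z\<in>Zs. (\<integral>\<^sup>+ v. ennreal (indicator U (zr z - v) * \<psi> (GG M r v)) \<partial>lborel))"
    proof (rule sum.cong[OF refl])
      fix z
      show "(\<integral>\<^sup>+ x. ennreal (indicator U x * \<psi> (GG M r (zr z - x))) \<partial>lborel)
          = (\<integral>\<^sup>+ v. ennreal (indicator U (zr z - v) * \<psi> (GG M r v)) \<partial>lborel)"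
        using lborel_refl[of "\<lambda>v. ennreal (indicator U (zr z - v) * \<psi> (GG M r v))" "zr z"]
        by (simp add: \<psi>_def)
    qed
    also have "\<dots> = (\<integral>\<^sup>+ v. (\<Sum>z\<in>Zs. ennreal (indicator U (zr z - v) * \<psi> (GG M r v))) \<partial>lborel)"
      by (rule nn_integral_sum[symmetric]) (simp add: \<psi>_def)
    also have "\<dots> = (\<integral>\<^sup>+ v. ennreal (\<psi> (GG M r v)) \<partial>lborel)"
    proof (rule nn_integral_cong)
      fix v
      show "(\<Sum>z\<in>Zs. ennreal (indicator U (zr z - v) * \<psi> (GG M r v))) = ennreal (\<psi> (GG M r v))"
      proof (cases "GG M r v = 0")
        case True then show ?thesis by (simp add: \<psi>_def)
      next
        case False
        then have vb: "\<bar>v$i\<bar> \<le> R" for i using Rs by blast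
        define z0 where "z0 = (\<chi> i. \<lceil>v$i\<rceil>)"
        have z0Z: "z0 \<in> Zs"
        proof -
          have "\<bar>\<lceil>v$i\<rceil>\<bar> \<le> N" for i
          proof -
            have "v$i \<le> R" "-R \<le> v$i" using vb[of i] by auto
            then have "\<lceil>v$i\<rceil> \<le> \<lceil>R\<rceil>" by (simp add: ceiling_mono)
            moreover have "v$i \<le> of_int \<lceil>v$i\<rceil>" "R \<le> of_int \<lceil>R\<rceil>" by (auto intro: le_of_int_ceiling)
            then have "real_of_int (- \<lceil>R\<rceil>) \<le> real_of_int \<lceil>v$i\<rceil>" using \<open>-R \<le> v$i\<close> by linarith
            then have "- \<lceil>R\<rceil> \<le> \<lceil>v$i\<rceil>" unfolding of_int_le_iff .
            ultimately show ?thesis unfolding N_def by simp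
          qed
          then show ?thesis unfolding Zs_def z0_def by simp
        qed
        have comp: "(x \<le> real_of_int a \<and> real_of_int a - x < 1) \<longleftrightarrow> a = \<lceil>x\<rceil>" for a x
          using ceiling_eq_iff[of x a] by linarith
        have iff: "(zr z - v \<in> U) \<longleftrightarrow> z = z0" for z
          unfolding U_def zr_def z0_def by (simp add: vec_eq_iff comp)
        have "(\<Sum>z\<in>Zs. ennreal (indicator U (zr z - v) * \<psi> (GG M r v)))
            = (\<Sum>z\<in>Zs. if z = z0 then ennreal (\<psi> (GG M r v)) else 0)"
          by (rule sum.cong[OF refl]) (simp add: iff indicator_def)
        also have "\<dots> = ennreal (\<psi> (GG M r v))" using finZ z0Z by simp
        finally show ?thesis .
      qed
    qed
    finally show ?thesis .
  qed
  have A4: "(\<integral>\<^sup>+ v. ennreal (\<psi> (GG M r v)) \<partial>lborel) = Ent' (GG M r)"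
    unfolding Ent'_def by (rule nn_integral_cong) (simp add: bt_same[OF GG01] \<psi>_def)
  show ?thesis using A1 A2 A3 A4 by simp
qed



lemma conv_return0:
  fixes N :: "(real^'n) measure"
  assumes fN: "finite_measure N" and sN: "sets N = sets borel"
  shows "convolution N (return borel 0) = N"
proof (rule measure_eqI)
  show "sets (convolution N (return borel 0)) = sets N" using sN by simp
  fix A assume "A \<in> sets (convolution N (return borel 0))"
  then have A[measurable]: "A \<in> sets borel" by simp
  have fR: "finite_measure (return borel (0::real^'n))"
    using prob_space_return[of "0::real^'n" borel] by (simp add: prob_space_def)
  have "emeasure (convolution N (return borel 0)) A
      = (\<integral>\<^sup>+ x. \<integral>\<^sup>+ y. indicator A (x + y) \<partial>return borel 0 \<partial>N)"
    by (rule convolution_emeasure') (use fN fR sN in auto)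
  also have "\<dots> = (\<integral>\<^sup>+ x. indicator A x \<partial>N)"
    by (rule nn_integral_cong) (subst nn_integral_return, auto)
  also have "\<dots> = emeasure N A" using A sN by simp
  finally show "emeasure (convolution N (return borel 0)) A = emeasure N A" .
qed

lemma cs_return0: "cs_prob (return borel (0::real^'n))"
  unfolding cs_prob_def
  by (intro conjI exI[of _ "{0}"]) (auto intro: prob_space_return)

lemma cs_conv:
  fixes M N :: "(real^'n) measure"
  assumes "cs_prob M" "cs_prob N"
  shows "cs_prob (convolution M N)"
proof -
  from assms obtain KM KN where pM: "prob_space M" and sM: "sets M = sets borel"
    and KM: "compact KM" "emeasure M KM = 1" and pN: "prob_space N" and sN: "sets N = sets borel"
    and KN: "compact KN" "emeasure N KN = 1"
    unfolding cs_prob_def by blast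
  have pC: "prob_space (convolution M N)" by (rule conv_prob[OF pM pN sM sN])
  define K where "K = {x + y | x y. x \<in> KM \<and> y \<in> KN}"
  have cK: "compact K" unfolding K_def by (rule compact_sums[OF KM(1) KN(1)])
  have Kb[measurable]: "K \<in> sets borel" using compact_imp_closed[OF cK] by simp
  have KMb: "KM \<in> sets M" "KN \<in> sets N" using compact_imp_closed[OF KM(1)] compact_imp_closed[OF KN(1)] sM sN by auto
  interpret pair_prob_space M N using pM pN by (simp add: pair_prob_space_def pair_sigma_finite_def prob_space_imp_sigma_finite)
  have m: "(\<lambda>(x::real^'n, y). x + y) \<in> measurable (M \<Otimes>\<^sub>M N) borel"
    by (simp add: measurable_cong_sets[OF sets_pair_measure_cong[OF sM sN] refl])
  have "emeasure (M \<Otimes>\<^sub>M N) (KM \<times> KN) = 1"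
    using sigma_finite_measure.emeasure_pair_measure_Times[OF prob_space_imp_sigma_finite[OF pN] KMb] KM(2) KN(2) by simp
  moreover have "emeasure (M \<Otimes>\<^sub>M N) (KM \<times> KN) \<le> emeasure (M \<Otimes>\<^sub>M N) ((\<lambda>(x, y). x + y) -` K \<inter> space (M \<Otimes>\<^sub>M N))"
  proof (rule emeasure_mono)
    show "KM \<times> KN \<subseteq> (\<lambda>(x, y). x + y) -` K \<inter> space (M \<Otimes>\<^sub>M N)"
      using sets_eq_imp_space_eq[OF sM] sets_eq_imp_space_eq[OF sN] by (auto simp: K_def space_pair_measure)
    show "(\<lambda>(x, y). x + y) -` K \<inter> space (M \<Otimes>\<^sub>M N) \<in> sets (M \<Otimes>\<^sub>M N)"
      using measurable_sets[OF m Kb] .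
  qed
  ultimately have "1 \<le> emeasure (convolution M N) K"
    unfolding convolution_def by (simp add: emeasure_distr[OF m Kb])
  moreover have "emeasure (convolution M N) K \<le> 1" using prob_space.emeasure_le_1[OF pC] .
  ultimately have "emeasure (convolution M N) K = 1" by simp
  then show ?thesis unfolding cs_prob_def using pC cK by auto
qed

lemma cs_pow: "cs_prob N \<Longrightarrow> cs_prob (conv_pow N k)"
  by (induction k) (auto intro: cs_conv cs_return0)



lemma step_ineq:
  fixes a b c :: "(real^'n) measure"
  assumes ca: "cs_prob a" and cb: "cs_prob b" and cc: "cs_prob c" and rp: "\<forall>i. r$i > 0"
  shows "avg_entropy (convolution (convolution a b) c) r + avg_entropy a r
       \<le> avg_entropy (convolution a c) r + avg_entropy (convolution a b) r"
proof -
  have cab: "cs_prob (convolution a b)" by (rule cs_conv[OF ca cb])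
  have cac: "cs_prob (convolution a c)" by (rule cs_conv[OF ca cc])
  have cabc: "cs_prob (convolution (convolution a b) c)" by (rule cs_conv[OF cab cc])
  have core: "Ent' (GG (convolution (convolution a b) c) r) + Ent' (GG a r)
       \<le> Ent' (GG (convolution a c) r) + Ent' (GG (convolution a b) r)"
    by (rule core_meas) (use ca cb cc in \<open>auto simp: cs_prob_def\<close>)
  note fin = Ent_finite[OF ca rp] Ent_finite[OF cab rp] Ent_finite[OF cac rp] Ent_finite[OF cabc rp]
  have "enn2real (Ent' (GG (convolution (convolution a b) c) r) + Ent' (GG a r))
      \<le> enn2real (Ent' (GG (convolution a c) r) + Ent' (GG (convolution a b) r))"
    by (rule enn2real_mono[OF core]) (use fin in simp)
  then have "enn2real (Ent' (GG (convolution (convolution a b) c) r)) + enn2real (Ent' (GG a r))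
      \<le> enn2real (Ent' (GG (convolution a c) r)) + enn2real (Ent' (GG (convolution a b) r))"
    using fin by (simp add: enn2real_plus)
  then have "(enn2real (Ent' (GG (convolution (convolution a b) c) r)) + enn2real (Ent' (GG a r))) / ln 2
      \<le> (enn2real (Ent' (GG (convolution a c) r)) + enn2real (Ent' (GG (convolution a b) r))) / ln 2"
    by (rule divide_right_mono) simp
  then show ?thesis
    unfolding tiling[OF ca rp] tiling[OF cab rp] tiling[OF cac rp] tiling[OF cabc rp]
    by (simp add: add_divide_distrib)
qed

theorem lemma2p7:
  fixes \<mu> \<nu> :: "(real ^ 'n) measure" and r :: "real ^ 'n" and k :: nat
  assumes "cs_prob \<mu>" and "cs_prob \<nu>"
    and "\<forall>i. r $ i > 0"
    and "k \<ge> 1"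
  shows "avg_entropy (convolution \<mu> (conv_pow \<nu> k)) r - avg_entropy \<mu> r
           \<le> real k * (avg_entropy (convolution \<mu> \<nu>) r - avg_entropy \<mu> r)"
proof -
  note cm = assms(1) and cn = assms(2) and rp = assms(3)
  have fs: "finite_measure M \<and> sets M = sets borel" if "cs_prob M" for M :: "(real^'n) measure"
    using that by (auto simp: cs_prob_def prob_space_def)
  have inc: "avg_entropy (convolution \<mu> (conv_pow \<nu> (Suc j))) r - avg_entropy (convolution \<mu> (conv_pow \<nu> j)) r
      \<le> avg_entropy (convolution \<mu> \<nu>) r - avg_entropy \<mu> r" for j
  proof -
    have cj: "cs_prob (conv_pow \<nu> j)" by (rule cs_pow[OF cn])
    have "convolution \<mu> (conv_pow \<nu> (Suc j)) = convolution \<mu> (convolution \<nu> (conv_pow \<nu> j))" by simp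
    also have "convolution \<nu> (conv_pow \<nu> j) = convolution (conv_pow \<nu> j) \<nu>"
      by (rule convolution_commutative) (use fs[OF cn] fs[OF cj] in auto)
    also have "convolution \<mu> (convolution (conv_pow \<nu> j) \<nu>) = convolution (convolution \<mu> (conv_pow \<nu> j)) \<nu>"
      by (rule convolution_associative) (use fs[OF cn] fs[OF cj] fs[OF cm] in auto)
    finally have e: "convolution \<mu> (conv_pow \<nu> (Suc j)) = convolution (convolution \<mu> (conv_pow \<nu> j)) \<nu>" .
    show ?thesis using step_ineq[OF cm cj cn rp] unfolding e by simp
  qed
  have "avg_entropy (convolution \<mu> (conv_pow \<nu> k)) r - avg_entropy \<mu> r
           \<le> real k * (avg_entropy (convolution \<mu> \<nu>) r - avg_entropy \<mu> r)" for k
  proof (induction k)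
    case 0
    have "convolution \<mu> (conv_pow \<nu> 0) = \<mu>" using conv_return0[of \<mu>] fs[OF cm] by simp
    then show ?case by simp
  next
    case (Suc k)
    then show ?case using inc[of k] by (simp add: algebra_simps)
  qed
  then show ?thesis .
qed


end
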